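(* In the M/M/1 setting below, if $\mathbb{E}[W(q^S_s\Lambda)]=W(q^S_s\lambda)$, then $q^S_m\le q^S_s\le q^S_e$.
   Context: Setting: an M/M/1 queue with true (deterministic) Poisson arrival rate $\lambda>0$ and exponential service times with rate $\mu$, so the expected time in system at effective arrival rate $x\in[0,\mu)$ is $W(x)=1/(\mu-x)$. Each served customer receives reward $R$ and incurs waiting cost $C>0$ per unit time, with $R\ge C/\mu$. Customers' beliefs about the arrival rate are described by a non-degenerate nonnegative random variable $\Lambda$ whose support has minimum $\lambda_{\min}$ and maximum $\lambda_{\max}$, with $0\le\lambda_{\min}<\lambda<\lambda_{\max}<\mu$. For $q\in[0,1]$: $\mathrm{Rev}^S(q)=q\lambda\,\mathbb{E}[R-C\,W(q\Lambda)]$ and $\mathrm{SW}^S(q)=q\lambda\,(R-C\,W(q\lambda))$, both strictly concave on $[0,1]$; $q^S_m$ is the maximizer of $\mathrm{Rev}^S$ over $[0,1]$ and $q^S_s$ is the maximizer of $\mathrm{SW}^S$ over $[0,1]$. The individual (no-fee) equilibrium $q^S_e$: if $R-C\,\mathbb{E}[W(\Lambda)]\ge0$ then $q^S_e=1$; otherwise $q^S_e$ is the unique $q\in[0,1]$ with $C\,\mathbb{E}[W(q\Lambda)]=R$. *)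

theory Defs
  imports "HOL-Probability.Probability"
begin

text \<open>Expected time in system of an M/M/1 queue with service rate mu at effective arrival rate x.\<close>
definition W :: "real \<Rightarrow> real \<Rightarrow> real" where
  "W mu x = 1 / (mu - x)"

definition supp :: "real measure \<Rightarrow> real set" where
  "supp D = {x. \<forall>e>0. measure D (ball x e) > 0}"

text \<open>Expected revenue (sigma-independent, belief distribution D of Lambda).\<close>
definition RevS :: "real measure \<Rightarrow> real \<Rightarrow> real \<Rightarrow> real \<Rightarrow> real \<Rightarrow> real \<Rightarrow> real" where
  "RevS D lam mu R C q = q * lam * (\<integral>x. (R - C * W mu (q * x)) \<partial>D)"

definition SWS :: "real \<Rightarrow> real \<Rightarrow> real \<Rightarrow> real \<Rightarrow> real \<Rightarrow> real" where
  "SWS lam mu R C q = q * lam * (R - C * W mu (q * lam))"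

text \<open>q is the individual (no-fee) equilibrium joining probability.\<close>
definition is_equilibrium :: "real measure \<Rightarrow> real \<Rightarrow> real \<Rightarrow> real \<Rightarrow> real \<Rightarrow> bool" where
  "is_equilibrium D mu R C q \<longleftrightarrow>
     (R - C * (\<integral>x. W mu x \<partial>D) \<ge> 0 \<and> q = 1) \<or>
     (R - C * (\<integral>x. W mu x \<partial>D) < 0 \<and> q \<in> {0..1} \<and> C * (\<integral>x. W mu (q * x) \<partial>D) = R)"

end

theory Submission
  imports Defs
begin

lemma AE_supp:
  assumes P: "prob_space D" and S: "sets D = sets borel"
  shows "AE x in D. x \<in> supp D"
proof -
  interpret prob_space D by (rule P)
  define F where "F = {ball x e | x e. e > 0 \<and> measure D (ball x e) = 0}"
  have "\<And>S. S \<in> F \<Longrightarrow> open S" by (auto simp: F_def)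
  then obtain F' where F': "F' \<subseteq> F" "countable F'" "\<Union>F' = \<Union>F" using Lindelof by metis
  have "(\<Union>S\<in>F'. S) \<in> null_sets D"
  proof (rule null_sets_UN')
    show "countable F'" by fact
    fix S assume "S \<in> F'"
    then have "S \<in> F" using F' by auto
    then obtain x e where "S = ball x e" "measure D (ball x e) = 0" by (auto simp: F_def)
    moreover have "ball x e \<in> sets D" using S by simp
    ultimately show "S \<in> null_sets D" by (simp add: null_sets_def emeasure_eq_measure)
  qed
  moreover have "{x \<in> space D. \<not> x \<in> supp D} \<subseteq> (\<Union>S\<in>F'. S)"
  proof
    fix x assume "x \<in> {x \<in> space D. \<not> x \<in> supp D}"
    then obtain e where e: "e > 0" "\<not> measure D (ball x e) > 0" by (auto simp: supp_def)
    then have "measure D (ball x e) = 0" using measure_nonneg[of D "ball x e"] by linarith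
    with e have "ball x e \<in> F" by (auto simp: F_def)
    moreover have "x \<in> ball x e" using e by simp
    ultimately have "x \<in> \<Union>F" by blast
    then show "x \<in> (\<Union>S\<in>F'. S)" using F'(3) by simp
  qed
  ultimately show ?thesis by (rule AE_I')
qed


lemma bnd_aux:
  fixes q x lmax mu :: real
  assumes "0 \<le> q" "q \<le> 1" "0 \<le> x" "x \<le> lmax" "lmax < mu"
  shows "0 < mu - q*x \<and> 0 < W mu (q*x) \<and> W mu (q*x) \<le> 1/(mu-lmax)"
proof -
  have "q*x \<le> 1*x" using assms by (intro mult_right_mono) auto
  then have h: "mu - lmax \<le> mu - q*x" "0 < mu - lmax" using assms by auto
  then show ?thesis unfolding W_def using frac_le[of 1 1 "mu-lmax" "mu-q*x"] by auto
qed

theorem theorem1: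
  fixes D :: "real measure" and lam mu R C lmin lmax qm qs qe :: real
  assumes D_prob: "prob_space D" and D_sets: "sets D = sets borel"
    and lam_pos: "lam > 0" and C_pos: "C > 0" and R_ge: "R \<ge> C / mu"
    and lmin_nonneg: "0 \<le> lmin" and ord: "lmin < lam" "lam < lmax" "lmax < mu"
    and lmin_supp: "lmin \<in> supp D" and lmax_supp: "lmax \<in> supp D"
    and supp_bounds: "\<forall>x\<in>supp D. lmin \<le> x \<and> x \<le> lmax"
    and qm_max: "qm \<in> {0..1}" "\<forall>q\<in>{0..1}. RevS D lam mu R C q \<le> RevS D lam mu R C qm"
    and qs_max: "qs \<in> {0..1}" "\<forall>q\<in>{0..1}. SWS lam mu R C q \<le> SWS lam mu R C qs"
    and qe_eq: "is_equilibrium D mu R C qe"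
    and hyp: "(\<integral>x. W mu (qs * x) \<partial>D) = W mu (qs * lam)"
  shows "qm \<le> qs \<and> qs \<le> qe"
proof -
  interpret prob_space D by (rule D_prob)
  have sp: "space D = UNIV" using sets_eq_imp_space_eq[OF D_sets] by simp
  have meas: "f \<in> borel_measurable D" if "f \<in> borel_measurable borel" for f :: "real \<Rightarrow> real"
    using that measurable_cong_sets[OF D_sets refl, of borel] by metis
  have AEb: "AE x in D. lmin \<le> x \<and> x \<le> lmax"
    using AE_supp[OF D_prob D_sets] by (rule eventually_mono) (use supp_bounds in auto)
  have nz: "\<not> (AE x in D. x = 0)"
  proof
    assume "AE x in D. x = 0"
    then have "AE x in D. \<not> x \<in> ball lmax (lmax/2)"
      by (rule eventually_mono) (use ord lmin_nonneg in \<open>auto simp: dist_real_def\<close>)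
    from emeasure_eq_0_AE[OF this] have "emeasure D (ball lmax (lmax/2)) = 0" by (simp add: sp ball_def)
    then have "measure D (ball lmax (lmax/2)) = 0" by (simp add: measure_def)
    moreover have "measure D (ball lmax (lmax/2)) > 0" using lmax_supp ord lmin_nonneg
      unfolding supp_def by auto
    ultimately show False by simp
  qed
  have pos: "0 < integral\<^sup>L D f" if fi: "integrable D f" and f0: "AE x in D. 0 \<le> f x"
    and fp: "AE x in D. x \<noteq> 0 \<longrightarrow> 0 < f x" for f :: "real \<Rightarrow> real"
  proof -
    have "0 \<le> integral\<^sup>L D f" by (rule integral_nonneg_AE[OF f0])
    moreover have "integral\<^sup>L D f \<noteq> 0"
    proof
      assume "integral\<^sup>L D f = 0"
      then have "AE x in D. f x = 0" using integral_nonneg_eq_0_iff_AE[OF fi f0] by simp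
      then have "AE x in D. x = 0" using fp by eventually_elim auto
      then show False using nz by simp
    qed
    ultimately show ?thesis by simp
  qed
  have intg: "integrable D g" if "g \<in> borel_measurable borel"
    and "\<And>x. lmin \<le> x \<Longrightarrow> x \<le> lmax \<Longrightarrow> \<bar>g x\<bar> \<le> B" for g :: "real \<Rightarrow> real" and B
  proof (rule integrable_const_bound[where B=B])
    show "AE x in D. norm (g x) \<le> B" using AEb by (rule eventually_mono) (use that in auto)
    show "g \<in> borel_measurable D" using that by (intro meas)
  qed
  have bnd: "0 < mu - q*x \<and> 0 < W mu (q*x) \<and> W mu (q*x) \<le> 1/(mu-lmax)"
    if "0 \<le> q" "q \<le> 1" "lmin \<le> x" "x \<le> lmax" for q x
    using bnd_aux[of q x lmax mu] that lmin_nonneg ord by auto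
  have Wm: "(\<lambda>x. W mu (q*x)) \<in> borel_measurable borel" for q
    unfolding W_def by measurable
  have Yi: "integrable D (\<lambda>x. W mu (q*x))" if "0 \<le> q" "q \<le> 1" for q
  proof (rule intg)
    show "(\<lambda>x. W mu (q*x)) \<in> borel_measurable borel" by (rule Wm)
    fix x assume "lmin \<le> x" "x \<le> lmax"
    then show "\<bar>W mu (q*x)\<bar> \<le> 1/(mu-lmax)" using bnd[of q x] that by auto
  qed
  define F where "F q = (\<integral>x. W mu (q * x) \<partial>D)" for q
  have Rev: "RevS D lam mu R C q = q*lam*(R - C * F q)" if "0 \<le> q" "q \<le> 1" for q
    unfolding RevS_def F_def using Yi[OF that] by (simp add: prob_space)
  have qs01: "0 \<le> qs" "qs \<le> 1" using qs_max(1) by auto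
  have qm01: "0 \<le> qm" "qm \<le> 1" using qm_max(1) by auto
  have mlam: "0 < mu - qs*lam" using bnd_aux[of qs lam lmax mu] qs01 ord lam_pos by auto
  have Rge: "C * W mu (qs*lam) \<le> R"
  proof (cases "qs = 0")
    case True then show ?thesis using R_ge by (simp add: W_def)
  next
    case False
    then have "0 < qs*lam" using qs01 lam_pos by simp
    moreover have "SWS lam mu R C 0 \<le> SWS lam mu R C qs" using qs_max(2) by auto
    then have "0 \<le> qs*lam*(R - C * W mu (qs*lam))" by (simp add: SWS_def)
    ultimately show ?thesis by (simp add: zero_le_mult_iff)
  qed
  then have FR: "C * F qs \<le> R" using hyp by (simp add: F_def)
  have part1: "qs \<le> qe"
  proof (cases "R - C * (\<integral>x. W mu x \<partial>D) \<ge> 0")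
    case True then show ?thesis using qe_eq qs01 unfolding is_equilibrium_def by auto
  next
    case False
    then have qe: "0 \<le> qe" "qe \<le> 1" "C * F qe = R" using qe_eq unfolding is_equilibrium_def F_def by auto
    show ?thesis
    proof (rule ccontr)
      assume "\<not> qs \<le> qe"
      then have lt: "qe < qs" by simp
      have "0 < (\<integral>x. W mu (qs*x) - W mu (qe*x) \<partial>D)"
      proof (rule pos)
        show "integrable D (\<lambda>x. W mu (qs*x) - W mu (qe*x))" using Yi qs01 qe by auto
        have *: "0 \<le> W mu (qs*x) - W mu (qe*x) \<and> (x \<noteq> 0 \<longrightarrow> 0 < W mu (qs*x) - W mu (qe*x))"
          if "lmin \<le> x" "x \<le> lmax" for x
        proof -
          have a: "0 < mu - qs*x" "0 < mu - qe*x" using bnd[of qs x] bnd[of qe x] that qs01 qe by auto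
          have x0: "0 \<le> x" using that lmin_nonneg by simp
          have "qe*x \<le> qs*x" using lt x0 by (intro mult_right_mono) auto
          moreover have "x \<noteq> 0 \<Longrightarrow> qe*x < qs*x" using lt x0 by (intro mult_strict_right_mono) auto
          ultimately show ?thesis using a unfolding W_def
            by (auto intro!: frac_less2 frac_le)
        qed
        show "AE x in D. 0 \<le> W mu (qs*x) - W mu (qe*x)" using AEb by (rule eventually_mono) (use * in auto)
        show "AE x in D. x \<noteq> 0 \<longrightarrow> 0 < W mu (qs*x) - W mu (qe*x)" using AEb by (rule eventually_mono) (use * in auto)
      qed
      then have "F qe < F qs" using Yi qs01 qe by (simp add: F_def)
      then have "C * F qe < C * F qs" using C_pos by simp
      then show False using FR qe by simp
    qed
  qed
  have part2: "qm \<le> qs"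
  proof (rule ccontr)
    assume "\<not> qm \<le> qs"
    then have lt: "qs < qm" by simp
    define K where "K = R - C*mu/(mu - qs*lam)^2"
    have K: "K \<le> 0"
    proof (rule ccontr)
      assume "\<not> K \<le> 0"
      then have Kp: "0 < lam*K" using lam_pos by simp
      have d: "((\<lambda>q. SWS lam mu R C q) has_real_derivative lam*K) (at qs)"
        unfolding SWS_def W_def K_def using mlam
        by (auto intro!: derivative_eq_intros simp: field_simps power2_eq_square)
      obtain d where d: "d > 0" "\<forall>h>0. h < d \<longrightarrow> SWS lam mu R C qs < SWS lam mu R C (qs + h)"
        using DERIV_pos_inc_right[OF d Kp] by blast
      define h where "h = min (d/2) ((1-qs)/2)"
      have h1: "h \<le> (1-qs)/2" "h \<le> d/2" unfolding h_def by (rule min.cobounded2, rule min.cobounded1)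
      have h0: "0 < h" using d lt qm01 unfolding h_def by auto
      have "0 < h" "h < d" "qs + h \<in> {0..1}" using h0 h1 d lt qm01 qs01 by auto
      then show False using d qs_max(2) by force
    qed
    define c where "c = W mu (qs*lam)"
    have Fqs: "F qs = c" using hyp by (simp add: F_def c_def)
    have Yqs: "integrable D (\<lambda>x. W mu (qs*x))" using Yi qs01 by auto
    have Yqm: "integrable D (\<lambda>x. W mu (qm*x))" using Yi qm01 by auto
    have Y2i: "integrable D (\<lambda>x. (W mu (qs*x))^2)"
    proof (rule intg)
      show "(\<lambda>x. (W mu (qs*x))^2) \<in> borel_measurable borel" unfolding W_def by measurable
      fix x assume "lmin \<le> x" "x \<le> lmax"
      then have "0 < W mu (qs*x)" "W mu (qs*x) \<le> 1/(mu-lmax)" using bnd[of qs x] qs01 by auto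
      then show "\<bar>(W mu (qs*x))^2\<bar> \<le> (1/(mu-lmax))^2" by (simp add: power_mono)
    qed
    define I2 where "I2 = (\<integral>x. (W mu (qs*x))^2 \<partial>D)"
    have eq: "(\<lambda>x. (W mu (qs*x) - c)^2) = (\<lambda>x. ((W mu (qs*x))^2 - (2*c) * W mu (qs*x)) + c^2)"
      by (simp add: fun_eq_iff power2_diff algebra_simps)
    have "(\<integral>x. (W mu (qs*x) - c)^2 \<partial>D) = I2 - 2*c*F qs + c^2"
      unfolding eq
      by (subst Bochner_Integration.integral_add[OF Bochner_Integration.integrable_diff[OF Y2i integrable_mult_right[OF Yqs]] integrable_const],
          subst Bochner_Integration.integral_diff[OF Y2i integrable_mult_right[OF Yqs]]) (simp add: I2_def F_def prob_space)
    moreover have "0 \<le> (\<integral>x. (W mu (qs*x) - c)^2 \<partial>D)" by (rule integral_nonneg_AE) simp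
    ultimately have I2c: "c^2 \<le> I2" using Fqs by (simp add: power2_eq_square)
    define G where "G x = qm * W mu (qm*x) - qs * W mu (qs*x) - (qm-qs)*mu*(W mu (qs*x))^2" for x
    have Gi: "integrable D G" unfolding G_def using Yqs Yqm Y2i by auto
    have IGeq: "integral\<^sup>L D G = qm * F qm - qs * F qs - (qm-qs)*mu*I2"
      unfolding G_def F_def I2_def using Yqs Yqm Y2i by (simp add: integral_diff)
    have Gpt: "0 \<le> G x \<and> (x \<noteq> 0 \<longrightarrow> 0 < G x)" if "lmin \<le> x" "x \<le> lmax" for x
    proof -
      have a: "0 < mu - qs*x" "0 < mu - qm*x" using bnd[of qs x] bnd[of qm x] that qs01 qm01 by auto
      have x0: "0 \<le> x" using that lmin_nonneg by simp
      have "G x = mu*(qm-qs)^2*x/((mu-qs*x)^2*(mu-qm*x))"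
        using a unfolding G_def W_def by (simp add: divide_simps power2_eq_square) algebra
      moreover have "0 < mu" using ord lmin_nonneg by simp
      ultimately show ?thesis using a x0 lt by (auto intro!: divide_pos_pos mult_pos_pos)
    qed
    have IG: "0 < integral\<^sup>L D G"
    proof (rule pos[OF Gi])
      show "AE x in D. 0 \<le> G x" using AEb by (rule eventually_mono) (use Gpt in auto)
      show "AE x in D. x \<noteq> 0 \<longrightarrow> 0 < G x" using AEb by (rule eventually_mono) (use Gpt in auto)
    qed
    have c2: "C*mu*c^2 = C*mu/(mu - qs*lam)^2" unfolding c_def W_def by (simp add: power_divide)
    have mu0: "0 < mu" using ord lmin_nonneg by simp
    have "RevS D lam mu R C qm - RevS D lam mu R C qs
        = lam*((qm-qs)*R - C*(qm * F qm - qs * F qs))"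
      using Rev[of qm] Rev[of qs] qm01 qs01 by (simp add: algebra_simps)
    also have "\<dots> = lam*((qm-qs)*R - C*((qm-qs)*mu*I2) - C*integral\<^sup>L D G)"
      unfolding IGeq by algebra
    also have "\<dots> \<le> lam*((qm-qs)*R - C*((qm-qs)*mu*c^2) - C*integral\<^sup>L D G)"
    proof -
      have "C*((qm-qs)*mu*c^2) \<le> C*((qm-qs)*mu*I2)"
        using I2c lt mu0 C_pos by (intro mult_left_mono) auto
      then show ?thesis using lam_pos by (intro mult_left_mono) auto
    qed
    also have "\<dots> = lam*((qm-qs)*K - C*integral\<^sup>L D G)"
      unfolding K_def c2[symmetric] by algebra
    also have "\<dots> < 0"
    proof -
      have "(qm-qs)*K \<le> 0" using K lt by (simp add: mult_nonneg_nonpos)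
      moreover have "0 < C*integral\<^sup>L D G" using C_pos IG by simp
      ultimately show ?thesis using lam_pos by (simp add: mult_pos_neg)
    qed
    finally have "RevS D lam mu R C qm < RevS D lam mu R C qs" by simp
    then show False using qm_max(2) qs_max(1) by force
  qed
  show ?thesis using part1 part2 by simp
qed

end
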